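(* Let $K_n$ ($n\ge1$) and $K$ be unconstrained Sierpinski carpets with the same $k,N$, and assume $K_n\to K$ in the Hausdorff metric. Then $\mu_n\Rightarrow\mu$ weakly on $(\square,d)$, where $\mu_n$, $\mu$ are the normalized Hausdorff measures on $K_n$, $K$ and $d$ is the Euclidean metric.
   Context: USC: integers $k\ge3$, $4(k-1)\le N\le k^2-1$; maps $\Psi_i(x)=x/k+c_i$ on $\square=[0,1]^2$ with pairwise intersections of the $\Psi_i(\square)$ a segment, point or empty, $\bigcup_i\Psi_i(\square)$ connected and invariant under the 8 isometries of $\square$, $[0,1]\times\{0\}\subset\bigcup_i\Psi_i(\square)\subset\square$; $K=\bigcup_i\Psi_iK$. The normalized Hausdorff measure of $K$ is the unique probability measure $\mu$ with $\mu=\frac1N\sum_{i=1}^N\mu\circ\Psi_i^{-1}$. *)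

theory Defs
  imports "HOL-Analysis.Analysis" "HOL-Probability.Probability"
begin

text \<open>The unit square, as a subset of the Euclidean plane \<open>real \<times> real\<close>
  (whose \<open>dist\<close> is the Euclidean metric).\<close>
definition usq :: "(real \<times> real) set" where
  "usq = {0..1} \<times> {0..1}"

definition hausdorff_dist :: "(real \<times> real) set \<Rightarrow> (real \<times> real) set \<Rightarrow> real" where
  "hausdorff_dist A B = max (SUP a\<in>A. infdist a B) (SUP b\<in>B. infdist b A)"

definition usc_map :: "nat \<Rightarrow> (nat \<Rightarrow> real \<times> real) \<Rightarrow> nat \<Rightarrow> real \<times> real \<Rightarrow> real \<times> real" where
  "usc_map k c i x = (1 / real k) *\<^sub>R x + c i"

definition square_isometries :: "((real \<times> real) \<Rightarrow> (real \<times> real)) set" where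
  "square_isometries =
     {\<lambda>(x,y). (x,y), \<lambda>(x,y). (1-x,y), \<lambda>(x,y). (x,1-y), \<lambda>(x,y). (1-x,1-y),
      \<lambda>(x,y). (y,x), \<lambda>(x,y). (1-y,x), \<lambda>(x,y). (y,1-x), \<lambda>(x,y). (1-y,1-x)}"

text \<open>Admissible data \<open>(k, N, c_1..c_N)\<close> of an unconstrained Sierpinski carpet
  (maps indexed by \<open>i < N\<close>).\<close>
definition usc_data :: "nat \<Rightarrow> nat \<Rightarrow> (nat \<Rightarrow> real \<times> real) \<Rightarrow> bool" where
  "usc_data k N c \<longleftrightarrow>
     k \<ge> 3 \<and> 4 * (k - 1) \<le> N \<and> N \<le> k\<^sup>2 - 1 \<and>
     (\<forall>i<N. \<forall>j<N. i \<noteq> j \<longrightarrow>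
        usc_map k c i ` usq \<inter> usc_map k c j ` usq = {} \<or>
        (\<exists>a b. usc_map k c i ` usq \<inter> usc_map k c j ` usq = closed_segment a b)) \<and>
     connected (\<Union>i<N. usc_map k c i ` usq) \<and>
     (\<forall>g\<in>square_isometries. g ` (\<Union>i<N. usc_map k c i ` usq) = (\<Union>i<N. usc_map k c i ` usq)) \<and>
     {0..1} \<times> {0} \<subseteq> (\<Union>i<N. usc_map k c i ` usq) \<and>
     (\<Union>i<N. usc_map k c i ` usq) \<subseteq> usq"

text \<open>\<open>K\<close> is the USC (attractor: the unique nonempty compact set with
  \<open>K = \<Union>_i \<Psi>_i K\<close>) generated by the data \<open>(k, N, c)\<close>.\<close>
definition usc :: "nat \<Rightarrow> nat \<Rightarrow> (nat \<Rightarrow> real \<times> real) \<Rightarrow> (real \<times> real) set \<Rightarrow> bool" where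
  "usc k N c K \<longleftrightarrow> usc_data k N c \<and> compact K \<and> K \<noteq> {} \<and>
     K = (\<Union>i<N. usc_map k c i ` K)"

text \<open>\<open>\<mu>\<close> is the normalized Hausdorff measure of the USC with data \<open>(k,N,c)\<close>:
  the (unique) Borel probability measure on the square with
  \<open>\<mu> = (1/N) \<Sum>_i \<mu> \<circ> \<Psi>_i\<^sup>-\<^sup>1\<close>.\<close>
definition usc_measure :: "nat \<Rightarrow> nat \<Rightarrow> (nat \<Rightarrow> real \<times> real) \<Rightarrow> (real \<times> real) measure \<Rightarrow> bool" where
  "usc_measure k N c \<mu> \<longleftrightarrow>
     sets \<mu> = sets (restrict_space borel usq) \<and> prob_space \<mu> \<and>
     (\<forall>A\<in>sets \<mu>. emeasure \<mu> A =
        ennreal (1 / real N) * (\<Sum>i<N. emeasure \<mu> (usc_map k c i -` A \<inter> space \<mu>)))"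

definition weak_conv_on :: "(real \<times> real) set \<Rightarrow> (nat \<Rightarrow> (real \<times> real) measure) \<Rightarrow> (real \<times> real) measure \<Rightarrow> bool" where
  "weak_conv_on S \<mu>s \<mu> \<longleftrightarrow>
     (\<forall>f :: real \<times> real \<Rightarrow> real. continuous_on S f \<and> bounded (f ` S) \<longrightarrow>
        (\<lambda>n. \<integral>x. f x \<partial>(\<mu>s n)) \<longlonglongrightarrow> (\<integral>x. f x \<partial>\<mu>))"

end

theory Submission
  imports Defs
begin

lemma mem_cell:
  assumes "k > 0"
  shows "y \<in> usc_map k e i ` usq \<longleftrightarrow>
    fst (e i) \<le> fst y \<and> fst y \<le> fst (e i) + 1/k \<and> snd (e i) \<le> snd y \<and> snd y \<le> snd (e i) + 1/k"
proof
  assume "y \<in> usc_map k e i ` usq"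
  then obtain x where x: "x \<in> usq" "y = (1/real k) *\<^sub>R x + e i" by (auto simp: usc_map_def)
  then show "fst (e i) \<le> fst y \<and> fst y \<le> fst (e i) + 1/k \<and> snd (e i) \<le> snd y \<and> snd y \<le> snd (e i) + 1/k"
    using assms by (cases x) (auto simp: usq_def divide_simps)
next
  assume h: "fst (e i) \<le> fst y \<and> fst y \<le> fst (e i) + 1/k \<and> snd (e i) \<le> snd y \<and> snd y \<le> snd (e i) + 1/k"
  define x where "x = (real k) *\<^sub>R (y - e i)"
  have "fst x = real k * (fst y - fst (e i))" "snd x = real k * (snd y - snd (e i))"
    by (simp_all add: x_def)
  moreover have "real k * (fst y - fst (e i)) \<le> 1" "real k * (snd y - snd (e i)) \<le> 1"
    using h assms by (simp_all add: field_simps)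
  ultimately have "x \<in> usq" using h assms by (auto simp: usq_def mem_Times_iff)
  moreover have "y = (1/real k) *\<^sub>R x + e i" using assms by (simp add: x_def)
  ultimately show "y \<in> usc_map k e i ` usq" by (auto simp: usc_map_def)
qed

definition cornr :: "nat \<Rightarrow> nat \<Rightarrow> (nat \<Rightarrow> real \<times> real) \<Rightarrow> bool" where
  "cornr k N e \<longleftrightarrow> (\<forall>i<N. 0 \<le> fst (e i) \<and> fst (e i) \<le> 1 - 1/k \<and> 0 \<le> snd (e i) \<and> snd (e i) \<le> 1 - 1/k)"

definition sepr :: "nat \<Rightarrow> nat \<Rightarrow> (nat \<Rightarrow> real \<times> real) \<Rightarrow> bool" where
  "sepr k N e \<longleftrightarrow> (\<forall>i<N. \<forall>j<N. i \<noteq> j \<longrightarrow> 1/k \<le> \<bar>fst (e i) - fst (e j)\<bar> \<or> 1/k \<le> \<bar>snd (e i) - snd (e j)\<bar>)"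

lemma data_k: "usc_data k N c \<Longrightarrow> k \<ge> 3"
  by (simp add: usc_data_def)

lemma data_cell_sub: "usc_data k N c \<Longrightarrow> i < N \<Longrightarrow> usc_map k c i ` usq \<subseteq> usq"
  unfolding usc_data_def by blast

lemma data_cor: assumes "usc_data k N c" shows "cornr k N c"
  unfolding cornr_def
proof (intro allI impI)
  fix i assume i: "i < N"
  have k: "k > 0" using data_k[OF assms] by simp
  have s: "usc_map k c i ` usq \<subseteq> usq" using data_cell_sub[OF assms i] .
  have "c i \<in> usc_map k c i ` usq" using k by (simp add: mem_cell)
  with s have a: "c i \<in> usq" by blast
  have "c i + (1/k, 1/k) \<in> usc_map k c i ` usq" using k by (simp add: mem_cell)
  with s have b: "c i + (1/k, 1/k) \<in> usq" by blast
  from a b show "0 \<le> fst (c i) \<and> fst (c i) \<le> 1 - 1/k \<and> 0 \<le> snd (c i) \<and> snd (c i) \<le> 1 - 1/k"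
    by (auto simp: usq_def mem_Times_iff)
qed

lemma data_sep: assumes "usc_data k N c" shows "sepr k N c"
  unfolding sepr_def
proof (intro allI impI, rule ccontr)
  fix i j assume i: "i < N" and j: "j < N" and ij: "i \<noteq> j"
    and nn: "\<not> (1/k \<le> \<bar>fst (c i) - fst (c j)\<bar> \<or> 1/k \<le> \<bar>snd (c i) - snd (c j)\<bar>)"
  have k: "k > 0" using data_k[OF assms] by simp
  define S where "S = usc_map k c i ` usq \<inter> usc_map k c j ` usq"
  define d1 where "d1 = 1/k - \<bar>fst (c i) - fst (c j)\<bar>"
  define d2 where "d2 = 1/k - \<bar>snd (c i) - snd (c j)\<bar>"
  have d1: "d1 > 0" and d2: "d2 > 0" using nn by (auto simp: d1_def d2_def)
  define r where "r = min d1 d2 / 2"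
  have r: "r > 0" using d1 d2 by (simp add: r_def)
  define z where "z = (max (fst (c i)) (fst (c j)) + d1/2, max (snd (c i)) (snd (c j)) + d2/2)"
  have "ball z r \<subseteq> S"
  proof
    fix w assume "w \<in> ball z r"
    then have "dist z w < r" by simp
    moreover have "dist (fst z) (fst w) \<le> dist z w" "dist (snd z) (snd w) \<le> dist z w"
      by (rule dist_fst_le, rule dist_snd_le)
    ultimately have w1: "\<bar>fst z - fst w\<bar> < r" and w2: "\<bar>snd z - snd w\<bar> < r"
      by (simp_all add: dist_real_def)
    have r1: "r \<le> d1/2" and r2: "r \<le> d2/2" by (simp_all add: r_def)
    have m1: "max (fst (c i)) (fst (c j)) + d1 = min (fst (c i)) (fst (c j)) + 1/k"
      by (auto simp: d1_def max_def min_def abs_if)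
    have m2: "max (snd (c i)) (snd (c j)) + d2 = min (snd (c i)) (snd (c j)) + 1/k"
      by (auto simp: d2_def max_def min_def abs_if)
    have z1: "fst z = max (fst (c i)) (fst (c j)) + d1/2" and z2: "snd z = max (snd (c i)) (snd (c j)) + d2/2"
      by (simp_all add: z_def)
    define M1 where "M1 = max (fst (c i)) (fst (c j))"
    define M2 where "M2 = max (snd (c i)) (snd (c j))"
    define L1 where "L1 = min (fst (c i)) (fst (c j))"
    define L2 where "L2 = min (snd (c i)) (snd (c j))"
    have w1': "fst z - fst w < r" "fst w - fst z < r" using w1 by (simp_all add: abs_less_iff)
    have w2': "snd z - snd w < r" "snd w - snd z < r" using w2 by (simp_all add: abs_less_iff)
    have "M1 < fst w" "fst w < L1 + 1/k" "M2 < snd w" "snd w < L2 + 1/k"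
      using w1' w2' r1 r2 m1 m2 z1 z2 unfolding M1_def[symmetric] M2_def[symmetric] L1_def[symmetric] L2_def[symmetric]
      by linarith+
    then have A: "max (fst (c i)) (fst (c j)) < fst w" "fst w < min (fst (c i)) (fst (c j)) + 1/k"
      "max (snd (c i)) (snd (c j)) < snd w" "snd w < min (snd (c i)) (snd (c j)) + 1/k"
      unfolding M1_def M2_def L1_def L2_def by blast+
    have B: "fst (c i) \<le> max (fst (c i)) (fst (c j))" "fst (c j) \<le> max (fst (c i)) (fst (c j))"
      "snd (c i) \<le> max (snd (c i)) (snd (c j))" "snd (c j) \<le> max (snd (c i)) (snd (c j))"
      "min (fst (c i)) (fst (c j)) \<le> fst (c i)" "min (fst (c i)) (fst (c j)) \<le> fst (c j)"
      "min (snd (c i)) (snd (c j)) \<le> snd (c i)" "min (snd (c i)) (snd (c j)) \<le> snd (c j)"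
      by auto
    have C: "fst w \<le> fst (c i) + 1/k" "fst w \<le> fst (c j) + 1/k"
      "snd w \<le> snd (c i) + 1/k" "snd w \<le> snd (c j) + 1/k"
      "fst (c i) \<le> fst w" "fst (c j) \<le> fst w" "snd (c i) \<le> snd w" "snd (c j) \<le> snd w"
      using A B by linarith+
    show "w \<in> S"
      unfolding S_def using k C by (simp add: mem_cell)
  qed
  then have "z \<in> interior S"
    using r by (meson centre_in_ball interior_maximal open_ball subsetD)
  moreover have "S = {} \<or> (\<exists>a b. S = closed_segment a b)"
    using assms i j ij unfolding usc_data_def S_def by blast
  ultimately show False
    using interior_closed_segment_ge2[where 'a="real \<times> real"] by auto
qed

lemma data_corners:
  assumes "usc_data k N c"
  shows "\<exists>i<N. c i = 0" "\<exists>j<N. 1 - 1/k \<le> fst (c j) \<and> 1 - 1/k \<le> snd (c j)"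
proof -
  have k: "k > 0" using data_k[OF assms] by simp
  have cor: "cornr k N c" by (rule data_cor[OF assms])
  have h0: "(0::real,0::real) \<in> (\<Union>i<N. usc_map k c i ` usq)"
  proof -
    have "(0::real,0::real) \<in> {0..1} \<times> {0}" by simp
    then show ?thesis using assms unfolding usc_data_def by blast
  qed
  then obtain i where i: "i < N" "(0,0) \<in> usc_map k c i ` usq" by auto
  then show "\<exists>i<N. c i = 0" using cor k unfolding cornr_def
    by (auto simp: mem_cell prod_eq_iff intro!: exI[of _ i])
  have g: "(\<lambda>(x,y). (1-x,1-y)) \<in> square_isometries" by (simp add: square_isometries_def)
  have "(\<lambda>(x::real,y::real). (1-x,1-y)) ` (\<Union>i<N. usc_map k c i ` usq) = (\<Union>i<N. usc_map k c i ` usq)"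
    using assms g unfolding usc_data_def by blast
  moreover have "(1::real,1::real) \<in> (\<lambda>(x::real,y::real). (1-x,1-y)) ` (\<Union>i<N. usc_map k c i ` usq)"
    by (rule image_eqI[OF _ h0]) simp
  ultimately have "(1,1) \<in> (\<Union>i<N. usc_map k c i ` usq)" by simp
  then obtain j where j: "j < N" "(1,1) \<in> usc_map k c j ` usq" by auto
  then show "\<exists>j<N. 1 - 1/k \<le> fst (c j) \<and> 1 - 1/k \<le> snd (c j)"
    using k by (auto simp: mem_cell intro!: exI[of _ j])
qed

definition exc :: "real \<times> real \<Rightarrow> real" where
  "exc x = max (max (- fst x) (fst x - 1)) (max (- snd x) (snd x - 1))"

lemma exc_usq: "exc x \<le> 0 \<longleftrightarrow> x \<in> usq"
  by (cases x) (auto simp: exc_def usq_def)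

lemma exc_map:
  assumes "cornr k N e" "i < N" "k > 0"
  shows "exc (usc_map k e i y) \<le> exc y / k"
proof -
  have b: "0 \<le> fst (e i)" "fst (e i) \<le> 1 - 1/k" "0 \<le> snd (e i)" "snd (e i) \<le> 1 - 1/k"
    using assms unfolding cornr_def by auto
  have kk: "real k > 0" using assms by simp
  have e: "- fst y \<le> exc y" "fst y - 1 \<le> exc y" "- snd y \<le> exc y" "snd y - 1 \<le> exc y"
    by (auto simp: exc_def)
  have "(- fst y) / k \<le> exc y / k" "(fst y - 1) / k \<le> exc y / k"
       "(- snd y) / k \<le> exc y / k" "(snd y - 1) / k \<le> exc y / k"
    by (rule divide_right_mono[OF e(1)], simp, rule divide_right_mono[OF e(2)], simp,
        rule divide_right_mono[OF e(3)], simp, rule divide_right_mono[OF e(4)], simp)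
  then show ?thesis using b kk
    by (auto simp: exc_def usc_map_def diff_divide_distrib)
qed

lemma exc_cont: "continuous_on A exc"
  unfolding exc_def by (intro continuous_intros)

lemma usc_sub: assumes "usc k N e K" shows "K \<subseteq> usq"
proof -
  have d: "usc_data k N e" and K: "compact K" "K \<noteq> {}" "K = (\<Union>i<N. usc_map k e i ` K)"
    using assms unfolding usc_def by auto
  have k: "k \<ge> 3" using data_k[OF d] .
  have cor: "cornr k N e" using data_cor[OF d] .
  obtain x where x: "x \<in> K" "\<forall>y\<in>K. exc y \<le> exc x"
    using continuous_attains_sup[OF K(1) K(2) exc_cont] by blast
  from x(1) K(3) obtain i y where iy: "i < N" "y \<in> K" "x = usc_map k e i y" by blast
  have "exc x \<le> exc y / k" using exc_map[OF cor iy(1)] k iy(3) by simp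
  also have "\<dots> \<le> exc x / k" using x(2) iy(2) k by (simp add: divide_right_mono)
  finally have "exc x \<le> exc x / k" .
  then have kx: "real k * exc x \<le> exc x" using k by (auto simp: field_simps)
  have "exc x \<le> 0"
  proof (rule ccontr)
    assume "\<not> exc x \<le> 0"
    then have "3 * exc x \<le> real k * exc x" using k by (intro mult_right_mono) auto
    then show False using kx \<open>\<not> exc x \<le> 0\<close> by linarith
  qed
  then show ?thesis using x(2) exc_usq by (meson order_trans subsetI)
qed

lemma usc_cells: assumes "usc k N e K" shows "K \<subseteq> (\<Union>j<N. usc_map k e j ` usq)"
proof -
  have "K = (\<Union>i<N. usc_map k e i ` K)" using assms unfolding usc_def by auto
  also have "\<dots> \<subseteq> (\<Union>j<N. usc_map k e j ` usq)" using usc_sub[OF assms] by blast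
  finally show ?thesis .
qed

lemma usc_inv: assumes "usc k N e K" "j < N" shows "usc_map k e j ` K \<subseteq> K"
  using assms unfolding usc_def by blast

lemma usc_small:
  assumes "usc k N e K"
  shows "\<forall>\<epsilon>>0. \<exists>w\<in>K. 0 < fst w \<and> fst w < \<epsilon> \<and> 0 < snd w \<and> snd w < \<epsilon>"
proof (intro allI impI)
  fix \<epsilon> :: real assume eps: "\<epsilon> > 0"
  have d: "usc_data k N e" and K: "K \<noteq> {}" using assms unfolding usc_def by auto
  have k: "k \<ge> 3" using data_k[OF d] .
  obtain i0 where i0: "i0 < N" "e i0 = 0" using data_corners(1)[OF d] by blast
  obtain j where j: "j < N" "1 - 1/k \<le> fst (e j)" "1 - 1/k \<le> snd (e j)" using data_corners(2)[OF d] by blast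
  obtain y where y: "y \<in> K" using K by blast
  define x0 where "x0 = usc_map k e j y"
  have x0K: "x0 \<in> K" using usc_inv[OF assms j(1)] y by (auto simp: x0_def)
  have "y \<in> usq" using usc_sub[OF assms] y by blast
  then have "0 \<le> fst y" "0 \<le> snd y" by (auto simp: usq_def mem_Times_iff)
  moreover have "1 - 1/k > 0" using k by (simp add: field_simps)
  ultimately have "0 < fst (e j)" "0 < snd (e j)" using j by linarith+
  moreover have "0 \<le> fst y / k" "0 \<le> snd y / k" using \<open>0 \<le> fst y\<close> \<open>0 \<le> snd y\<close> by simp_all
  ultimately have x0p: "0 < fst x0" "0 < snd x0" by (auto simp: x0_def usc_map_def)
  have "x0 \<in> usq" using usc_sub[OF assms] x0K by blast
  then have x01: "fst x0 \<le> 1" "snd x0 \<le> 1" by (auto simp: usq_def mem_Times_iff)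
  have pw: "(1/real k)^m *\<^sub>R x0 \<in> K" for m
  proof (induction m)
    case 0 then show ?case using x0K by simp
  next
    case (Suc m)
    have "usc_map k e i0 ((1/real k)^m *\<^sub>R x0) \<in> K" using usc_inv[OF assms i0(1)] Suc by blast
    then show ?case using i0(2) by (simp add: usc_map_def)
  qed
  obtain m where m: "(1/real k)^m < \<epsilon>" using real_arch_pow_inv[OF eps, of "1/real k"] k by auto
  have pp: "0 < (1/real k)^m" using k by simp
  have "(1/real k)^m * fst x0 \<le> (1/real k)^m" "(1/real k)^m * snd x0 \<le> (1/real k)^m"
    using x01 pp by (simp_all add: mult_left_le)
  then have "(1/real k)^m * fst x0 < \<epsilon>" "(1/real k)^m * snd x0 < \<epsilon>" using m by linarith+
  moreover have "0 < (1/real k)^m * fst x0" "0 < (1/real k)^m * snd x0" using pp x0p by simp_all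
  ultimately show "\<exists>w\<in>K. 0 < fst w \<and> fst w < \<epsilon> \<and> 0 < snd w \<and> snd w < \<epsilon>"
    using pw[of m] by (intro bexI[of _ "(1/real k)^m *\<^sub>R x0"]) auto
qed

lemma rigid_half:
  fixes e e' :: "nat \<Rightarrow> real \<times> real"
  assumes k: "k > 0" and sepE: "sepr k N e"
    and sub': "K \<subseteq> (\<Union>j<N. usc_map k e' j ` usq)"
    and inv: "\<forall>j<N. usc_map k e j ` K \<subseteq> K"
    and small: "\<forall>\<epsilon>>0. \<exists>w\<in>K. 0 < fst w \<and> fst w < \<epsilon> \<and> 0 < snd w \<and> snd w < \<epsilon>"
    and pE: "p \<in> e ` {..<N}" and pn: "p \<notin> e' ` {..<N}"
    and lexmin: "\<forall>q \<in> e' ` {..<N} - e ` {..<N}. snd p < snd q \<or> (snd p = snd q \<and> fst p \<le> fst q)"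
  shows False
proof -
  define D' where "D' = e' ` {..<N} - e ` {..<N}"
  have fin: "finite D'" by (simp add: D'_def)
  define gap where "gap q = (if snd p < snd q then snd q - snd p else fst q - fst p)" for q
  have gpos: "gap q > 0" if "q \<in> D'" for q
  proof -
    have "q \<noteq> p" using that pn by (auto simp: D'_def)
    then show ?thesis using lexmin that by (auto simp: D'_def gap_def prod_eq_iff)
  qed
  have ev: "\<forall>\<^sub>F \<epsilon> in at_right (0::real). \<forall>q\<in>D'. \<epsilon> / k < gap q"
  proof (rule eventually_ball_finite[OF fin], intro ballI)
    fix q assume "q \<in> D'"
    have "((\<lambda>\<epsilon>. \<epsilon> / real k) \<longlongrightarrow> 0) (at_right 0)"
      by (rule tendsto_divide_zero[OF tendsto_ident_at])
    then show "\<forall>\<^sub>F \<epsilon> in at_right 0. \<epsilon> / k < gap q"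
      using gpos[OF \<open>q \<in> D'\<close>] by (auto dest: order_tendstoD(2))
  qed
  have ev1: "\<forall>\<^sub>F \<epsilon> in at_right (0::real). \<epsilon> < 1"
    using eventually_at_right_less[of "0::real"]
    by (metis (mono_tags, lifting) eventually_at_right_field zero_less_one)
  have "\<exists>\<epsilon>. 0 < \<epsilon> \<and> \<epsilon> < 1 \<and> (\<forall>q\<in>D'. \<epsilon> / k < gap q)"
    using eventually_happens'[OF _ eventually_conj[OF eventually_at_right_less[of "0::real"] eventually_conj[OF ev1 ev]]]
    by auto
  then obtain \<epsilon> where eps: "0 < \<epsilon>" "\<epsilon> < 1" "\<forall>q\<in>D'. \<epsilon> / k < gap q" by blast
  obtain w where w: "w \<in> K" "0 < fst w" "fst w < \<epsilon>" "0 < snd w" "snd w < \<epsilon>"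
    using small eps(1) by blast
  obtain i where i: "i < N" "p = e i" using pE by blast
  define z where "z = usc_map k e i w"
  have zK: "z \<in> K" using inv i w by (auto simp: z_def)
  have kk: "real k > 0" using k by simp
  have z1: "fst z = fst p + fst w / k" "snd z = snd p + snd w / k"
    by (simp_all add: z_def usc_map_def i)
  have wk: "0 < fst w / k" "fst w / k < \<epsilon> / k" "0 < snd w / k" "snd w / k < \<epsilon> / k"
    using w kk by (simp_all add: divide_strict_right_mono)
  have ek: "\<epsilon> / k < 1 / k" using eps kk by (simp add: divide_strict_right_mono)
  obtain j where j: "j < N" "z \<in> usc_map k e' j ` usq" using sub' zK by blast
  define q where "q = e' j"
  have zq: "fst q \<le> fst z" "fst z \<le> fst q + 1/k" "snd q \<le> snd z" "snd z \<le> snd q + 1/k"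
    using j(2) k by (auto simp: mem_cell q_def)
  show False
  proof (cases "q \<in> e ` {..<N}")
    case True
    then obtain i' where i': "i' < N" "q = e i'" by blast
    have "q \<noteq> p" using pn j by (auto simp: q_def)
    then have "i \<noteq> i'" using i i' by auto
    then have "1/k \<le> \<bar>fst p - fst q\<bar> \<or> 1/k \<le> \<bar>snd p - snd q\<bar>"
      using sepE i i' unfolding sepr_def by auto
    then show False using zq z1 wk ek by (auto simp: abs_if split: if_splits)
  next
    case False
    then have "q \<in> D'" using j by (auto simp: D'_def q_def)
    then have g: "\<epsilon> / k < gap q" using eps by blast
    show False
    proof (cases "snd p < snd q")
      case True then show False using g zq z1 wk by (simp add: gap_def)
    next
      case False then show False using g zq z1 wk by (simp add: gap_def)
    qed
  qed
qed

lemma lex_min_exists: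
  fixes D :: "(real \<times> real) set"
  assumes "finite D" "D \<noteq> {}"
  shows "\<exists>p\<in>D. \<forall>q\<in>D. snd p < snd q \<or> (snd p = snd q \<and> fst p \<le> fst q)"
proof -
  define y0 where "y0 = Min (snd ` D)"
  have y0: "y0 \<in> snd ` D" "\<forall>q\<in>D. y0 \<le> snd q" using assms by (auto simp: y0_def)
  define D0 where "D0 = {q\<in>D. snd q = y0}"
  have D0: "finite D0" "D0 \<noteq> {}" using assms y0 by (auto simp: D0_def)
  define x0 where "x0 = Min (fst ` D0)"
  have x0: "x0 \<in> fst ` D0" "\<forall>q\<in>D0. x0 \<le> fst q" using D0 by (auto simp: x0_def)
  then obtain p where p: "p \<in> D0" "fst p = x0" by blast
  have "\<forall>q\<in>D. snd p < snd q \<or> (snd p = snd q \<and> fst p \<le> fst q)"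
  proof
    fix q assume q: "q \<in> D"
    have sp: "snd p = y0" using p by (simp add: D0_def)
    show "snd p < snd q \<or> (snd p = snd q \<and> fst p \<le> fst q)"
    proof (cases "snd q = y0")
      case True then have "q \<in> D0" using q by (simp add: D0_def)
      then show ?thesis using x0 p sp True by auto
    next
      case False then show ?thesis using y0 q sp by force
    qed
  qed
  then show ?thesis using p by (auto simp: D0_def)
qed

lemma rigid:
  fixes e e' :: "nat \<Rightarrow> real \<times> real"
  assumes k: "k > 0" and sepE: "sepr k N e" and sepE': "sepr k N e'"
    and sub: "K \<subseteq> (\<Union>j<N. usc_map k e j ` usq)"
    and sub': "K \<subseteq> (\<Union>j<N. usc_map k e' j ` usq)"
    and inv: "\<forall>j<N. usc_map k e j ` K \<subseteq> K"
    and inv': "\<forall>j<N. usc_map k e' j ` K \<subseteq> K"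
    and small: "\<forall>\<epsilon>>0. \<exists>w\<in>K. 0 < fst w \<and> fst w < \<epsilon> \<and> 0 < snd w \<and> snd w < \<epsilon>"
  shows "e ` {..<N} = e' ` {..<N}"
proof (rule ccontr)
  assume ne: "e ` {..<N} \<noteq> e' ` {..<N}"
  define D where "D = (e ` {..<N} - e' ` {..<N}) \<union> (e' ` {..<N} - e ` {..<N})"
  have "finite D" "D \<noteq> {}" using ne by (auto simp: D_def)
  then obtain p where p: "p \<in> D" "\<forall>q\<in>D. snd p < snd q \<or> (snd p = snd q \<and> fst p \<le> fst q)"
    using lex_min_exists by blast
  show False
  proof (cases "p \<in> e ` {..<N}")
    case True
    then have "p \<notin> e' ` {..<N}" using p(1) by (auto simp: D_def)
    then show False
      using rigid_half[OF k sepE sub' inv small True] p(2) by (auto simp: D_def)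
  next
    case False
    then have "p \<in> e' ` {..<N}" using p(1) by (auto simp: D_def)
    then show False
      using rigid_half[OF k sepE' sub inv' small _ False] p(2) by (auto simp: D_def)
  qed
qed

lemma compact_usq: "compact usq"
  by (simp add: usq_def compact_Times)

lemma usq_ne: "usq \<noteq> {}" by (simp add: usq_def)

lemma compact_cell: "compact (usc_map k e j ` usq)"
  unfolding usc_map_def by (intro compact_continuous_image continuous_intros compact_usq)

lemma hd_le1:
  assumes "compact A" "a \<in> A"
  shows "infdist a B \<le> hausdorff_dist A B"
proof -
  have "compact ((\<lambda>a. infdist a B) ` A)"
    by (intro compact_continuous_image continuous_intros assms(1))
  then have "bdd_above ((\<lambda>a. infdist a B) ` A)" by (intro bounded_imp_bdd_above compact_imp_bounded)
  then have "infdist a B \<le> (SUP a\<in>A. infdist a B)" using assms(2) by (rule cSUP_upper2) simp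
  then show ?thesis unfolding hausdorff_dist_def by simp
qed

lemma hd_le2:
  assumes "compact B" "b \<in> B"
  shows "infdist b A \<le> hausdorff_dist A B"
proof -
  have "compact ((\<lambda>b. infdist b A) ` B)"
    by (intro compact_continuous_image continuous_intros assms(1))
  then have "bdd_above ((\<lambda>b. infdist b A) ` B)" by (intro bounded_imp_bdd_above compact_imp_bounded)
  then have "infdist b A \<le> (SUP b\<in>B. infdist b A)" using assms(2) by (rule cSUP_upper2) simp
  then show ?thesis unfolding hausdorff_dist_def by simp
qed

lemma dist_map:
  assumes "k \<ge> 1"
  shows "dist (usc_map k e j x) (usc_map k e' j y) \<le> dist x y + dist (e j) (e' j)"
proof -
  have "dist (usc_map k e j x) (usc_map k e' j y) = norm ((1/real k) *\<^sub>R (x - y) + (e j - e' j))"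
    by (simp add: usc_map_def dist_norm algebra_simps)
  also have "\<dots> \<le> norm ((1/real k) *\<^sub>R (x - y)) + norm (e j - e' j)" by (rule norm_triangle_ineq)
  also have "norm ((1/real k) *\<^sub>R (x - y)) = norm (x - y) / k" by simp
  also have "\<dots> \<le> norm (x - y)"
  proof -
    have "norm (x - y) * 1 \<le> norm (x - y) * real k" using assms by (intro mult_left_mono) auto
    moreover have "real k > 0" using assms by simp
    ultimately show ?thesis by (simp add: divide_le_eq)
  qed
  finally show ?thesis by (simp add: dist_norm)
qed

lemma infdist_cell:
  assumes "k > 0" "y \<in> usc_map k e j ` usq"
  shows "infdist y (usc_map k e' j ` usq) \<le> dist (e j) (e' j)"
proof -
  have "y - e j + e' j \<in> usc_map k e' j ` usq" using assms by (simp add: mem_cell)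
  then have "infdist y (usc_map k e' j ` usq) \<le> dist y (y - e j + e' j)" by (rule infdist_le)
  also have "\<dots> = dist (e j) (e' j)" by (simp add: dist_norm norm_minus_commute algebra_simps)
  finally show ?thesis .
qed

lemma limit_config:
  fixes a :: "nat \<Rightarrow> nat \<Rightarrow> real \<times> real" and L :: "nat \<Rightarrow> (real \<times> real) set"
  assumes U: "\<And>n. usc k N (a n) (L n)" and K: "compact K" "K \<noteq> {}"
    and hd: "(\<lambda>n. hausdorff_dist (L n) K) \<longlonglongrightarrow> 0"
    and lim: "\<forall>i<N. (\<lambda>n. a n i) \<longlonglongrightarrow> c' i"
  shows "sepr k N c'" "cornr k N c'" "K \<subseteq> (\<Union>j<N. usc_map k c' j ` usq)"
    "\<forall>j<N. usc_map k c' j ` K \<subseteq> K"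
proof -
  have d0: "usc_data k N (a 0)" using U unfolding usc_def by auto
  have k: "k \<ge> 3" using data_k[OF d0] .
  have Npos: "N > 0" using d0 k unfolding usc_data_def by auto
  have Lc: "compact (L n)" "L n \<noteq> {}" for n using U unfolding usc_def by auto
  have sepn: "sepr k N (a n)" for n using data_sep U unfolding usc_def by blast
  have corn: "cornr k N (a n)" for n using data_cor U unfolding usc_def by blast
  show "sepr k N c'"
    unfolding sepr_def
  proof (intro allI impI)
    fix i j assume ij: "i < N" "j < N" "i \<noteq> j"
    have t: "(\<lambda>n. max \<bar>fst (a n i) - fst (a n j)\<bar> \<bar>snd (a n i) - snd (a n j)\<bar>) \<longlonglongrightarrow>
             max \<bar>fst (c' i) - fst (c' j)\<bar> \<bar>snd (c' i) - snd (c' j)\<bar>"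
      using lim ij by (intro tendsto_intros) auto
    have "\<forall>n. 1/k \<le> max \<bar>fst (a n i) - fst (a n j)\<bar> \<bar>snd (a n i) - snd (a n j)\<bar>"
      using sepn ij unfolding sepr_def by (auto simp: le_max_iff_disj)
    then have "1/k \<le> max \<bar>fst (c' i) - fst (c' j)\<bar> \<bar>snd (c' i) - snd (c' j)\<bar>"
      by (intro LIMSEQ_le_const[OF t]) auto
    then show "1/k \<le> \<bar>fst (c' i) - fst (c' j)\<bar> \<or> 1/k \<le> \<bar>snd (c' i) - snd (c' j)\<bar>"
      by (simp add: le_max_iff_disj)
  qed
  show "cornr k N c'"
    unfolding cornr_def
  proof (intro allI impI)
    fix i assume i: "i < N"
    have t1: "(\<lambda>n. fst (a n i)) \<longlonglongrightarrow> fst (c' i)" and t2: "(\<lambda>n. snd (a n i)) \<longlonglongrightarrow> snd (c' i)"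
      using lim i by (auto intro: tendsto_intros)
    have b: "\<forall>n. 0 \<le> fst (a n i) \<and> fst (a n i) \<le> 1 - 1/k \<and> 0 \<le> snd (a n i) \<and> snd (a n i) \<le> 1 - 1/k"
      using corn i unfolding cornr_def by auto
    show "0 \<le> fst (c' i) \<and> fst (c' i) \<le> 1 - 1/k \<and> 0 \<le> snd (c' i) \<and> snd (c' i) \<le> 1 - 1/k"
      using LIMSEQ_le_const[OF t1, of 0] LIMSEQ_le_const2[OF t1, of "1 - 1/k"]
            LIMSEQ_le_const[OF t2, of 0] LIMSEQ_le_const2[OF t2, of "1 - 1/k"] b by auto
  qed
  define R where "R n = hausdorff_dist (L n) K + (\<Sum>i<N. dist (a n i) (c' i))" for n
  have R: "R \<longlonglongrightarrow> 0"
  proof -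
    have "(\<lambda>n. \<Sum>i<N. dist (a n i) (c' i)) \<longlonglongrightarrow> (\<Sum>i<N. dist (c' i) (c' i))"
      using lim by (intro tendsto_sum tendsto_dist) auto
    then have "(\<lambda>n. hausdorff_dist (L n) K + (\<Sum>i<N. dist (a n i) (c' i))) \<longlonglongrightarrow> 0 + (\<Sum>i<N. dist (c' i) (c' i))"
      by (intro tendsto_add hd)
    then show ?thesis unfolding R_def by simp
  qed
  have sumle: "dist (a n j) (c' j) \<le> (\<Sum>i<N. dist (a n i) (c' i))" if "j < N" for n j
    using that by (intro member_le_sum) auto
  show "K \<subseteq> (\<Union>j<N. usc_map k c' j ` usq)"
  proof
    fix x assume x: "x \<in> K"
    have ex: "\<exists>j<N. infdist x (usc_map k c' j ` usq) \<le> R n" for n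
    proof -
      obtain y where y: "y \<in> L n" "infdist x (L n) = dist x y"
        using infdist_attains_inf[OF compact_imp_closed[OF Lc(1)] Lc(2)] by metis
      have "infdist x (L n) \<le> hausdorff_dist (L n) K" using hd_le2[OF K(1) x] .
      obtain j where j: "j < N" "y \<in> usc_map k (a n) j ` usq" using usc_cells[OF U] y(1) by blast
      have "infdist x (usc_map k c' j ` usq) \<le> infdist y (usc_map k c' j ` usq) + dist x y"
        by (rule infdist_triangle)
      also have "\<dots> \<le> dist (a n j) (c' j) + hausdorff_dist (L n) K"
        using infdist_cell[OF _ j(2), of c'] k y(2) \<open>infdist x (L n) \<le> _\<close> by auto
      also have "\<dots> \<le> R n" using sumle[OF j(1)] by (simp add: R_def)
      finally show ?thesis using j(1) by blast
    qed
    define m where "m = Min ((\<lambda>j. infdist x (usc_map k c' j ` usq)) ` {..<N})"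
    have mle: "m \<le> R n" for n
    proof -
      obtain j where "j < N" "infdist x (usc_map k c' j ` usq) \<le> R n" using ex by blast
      moreover have "m \<le> infdist x (usc_map k c' j ` usq)" unfolding m_def
        by (rule Min_le) (auto simp: \<open>j < N\<close>)
      ultimately show ?thesis by linarith
    qed
    have "m \<le> 0" using LIMSEQ_le_const[OF R, of m] mle by auto
    moreover have "m \<in> (\<lambda>j. infdist x (usc_map k c' j ` usq)) ` {..<N}"
      unfolding m_def using Npos by (intro Min_in) auto
    then obtain j where j: "j < N" "m = infdist x (usc_map k c' j ` usq)" by blast
    ultimately have "infdist x (usc_map k c' j ` usq) = 0" using infdist_nonneg by (metis antisym)
    then have "x \<in> usc_map k c' j ` usq"
      using in_closed_iff_infdist_zero[OF compact_imp_closed[OF compact_cell]] usq_ne by blast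
    then show "x \<in> (\<Union>j<N. usc_map k c' j ` usq)" using j(1) by blast
  qed
  show "\<forall>j<N. usc_map k c' j ` K \<subseteq> K"
  proof (intro allI impI subsetI)
    fix j z assume j: "j < N" and z: "z \<in> usc_map k c' j ` K"
    then obtain x where x: "x \<in> K" "z = usc_map k c' j x" by blast
    have le: "infdist z K \<le> 2 * R n" for n
    proof -
      obtain y where y: "y \<in> L n" "infdist x (L n) = dist x y"
        using infdist_attains_inf[OF compact_imp_closed[OF Lc(1)] Lc(2)] by metis
      have h1: "dist x y \<le> hausdorff_dist (L n) K" using hd_le2[OF K(1) x(1), of "L n"] y(2) by simp
      have yy: "usc_map k (a n) j y \<in> L n" using usc_inv[OF U j] y(1) by blast
      have h2: "infdist (usc_map k (a n) j y) K \<le> hausdorff_dist (L n) K" using hd_le1[OF Lc(1) yy] .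
      have "infdist z K \<le> infdist (usc_map k (a n) j y) K + dist z (usc_map k (a n) j y)"
        by (rule infdist_triangle)
      also have "dist z (usc_map k (a n) j y) \<le> dist x y + dist (c' j) (a n j)"
        unfolding x(2) using dist_map k by simp
      finally have "infdist z K \<le> 2 * hausdorff_dist (L n) K + dist (a n j) (c' j)"
        using h1 h2 by (simp add: dist_commute)
      moreover have "0 \<le> hausdorff_dist (L n) K"
      proof -
        obtain y0 where y0: "y0 \<in> L n" using Lc(2) by blast
        show ?thesis using hd_le1[OF Lc(1) y0, of K] infdist_nonneg[of y0 K] by linarith
      qed
      ultimately show ?thesis using sumle[OF j, of n] zero_le_dist[of "a n j" "c' j"] unfolding R_def distrib_left by linarith
    qed
    have "(\<lambda>n. 2 * R n) \<longlonglongrightarrow> 0" using tendsto_mult_right_zero[OF R] by simp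
    then have "infdist z K \<le> 0" using LIMSEQ_le_const[of "\<lambda>n. 2 * R n" 0 "infdist z K"] le by auto
    then have "infdist z K = 0" using infdist_nonneg by (metis antisym)
    then show "z \<in> K" using in_closed_iff_infdist_zero[OF compact_imp_closed[OF K(1)] K(2)] by blast
  qed
qed

lemma subseq_tuple:
  fixes a :: "nat \<Rightarrow> nat \<Rightarrow> real \<times> real"
  assumes "\<forall>n i. a n i \<in> S" "compact S"
  shows "\<exists>r. strict_mono r \<and> (\<forall>i<M. \<exists>l. (\<lambda>n. a (r n) i) \<longlonglongrightarrow> l)"
proof (induction M)
  case 0
  show ?case by (intro exI[of _ id]) (auto simp: strict_mono_def)
next
  case (Suc M)
  then obtain r where r: "strict_mono r" "\<forall>i<M. \<exists>l. (\<lambda>n. a (r n) i) \<longlonglongrightarrow> l" by blast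
  have aS: "\<forall>n. a (r n) M \<in> S" using assms(1) by simp
  obtain l r2 where r2: "l \<in> S" "strict_mono r2" "((\<lambda>n. a (r n) M) \<circ> r2) \<longlonglongrightarrow> l"
    by (rule seq_compactE[OF compact_imp_seq_compact[OF assms(2)] aS])
  have "strict_mono (r \<circ> r2)" using r(1) r2(2) by (simp add: strict_mono_o)
  moreover have "\<forall>i<Suc M. \<exists>l. (\<lambda>n. a ((r \<circ> r2) n) i) \<longlonglongrightarrow> l"
  proof (intro allI impI)
    fix i assume i: "i < Suc M"
    show "\<exists>l. (\<lambda>n. a ((r \<circ> r2) n) i) \<longlonglongrightarrow> l"
    proof (cases "i = M")
      case True
      have "(\<lambda>n. a ((r \<circ> r2) n) M) \<longlonglongrightarrow> l" using r2(3) by (simp add: o_def)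
      then show ?thesis using True by blast
    next
      case False
      then have "i < M" using i by simp
      then obtain l' where "(\<lambda>n. a (r n) i) \<longlonglongrightarrow> l'" using r(2) by blast
      then have "((\<lambda>n. a (r n) i) \<circ> r2) \<longlonglongrightarrow> l'" by (rule LIMSEQ_subseq_LIMSEQ[OF _ r2(2)])
      then have "(\<lambda>n. a ((r \<circ> r2) n) i) \<longlonglongrightarrow> l'" by (simp add: o_def)
      then show ?thesis by blast
    qed
  qed
  ultimately show ?case by blast
qed

lemma um_space: assumes "usc_measure k N e \<nu>" shows "space \<nu> = usq"
proof -
  have "space \<nu> = space (restrict_space borel usq)"
    using assms unfolding usc_measure_def by (intro sets_eq_imp_space_eq) simp
  then show ?thesis by (simp add: space_restrict_space)
qed

lemma um_sets: "usc_measure k N e \<nu> \<Longrightarrow> sets \<nu> = sets (restrict_space borel usq)"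
  unfolding usc_measure_def by simp

lemma um_prob: "usc_measure k N e \<nu> \<Longrightarrow> prob_space \<nu>"
  unfolding usc_measure_def by simp

lemma map_usq:
  assumes "cornr k N e" "i < N" "k > 0" "x \<in> usq"
  shows "usc_map k e i x \<in> usq"
proof -
  have b: "0 \<le> fst (e i)" "fst (e i) \<le> 1 - 1/k" "0 \<le> snd (e i)" "snd (e i) \<le> 1 - 1/k"
    using assms unfolding cornr_def by auto
  have x: "0 \<le> fst x" "fst x \<le> 1" "0 \<le> snd x" "snd x \<le> 1" using assms(4) by (auto simp: usq_def mem_Times_iff)
  have kk: "real k > 0" using assms by simp
  have "fst x / k \<le> 1 / k" "snd x / k \<le> 1/k" using x kk by (simp_all add: divide_right_mono)
  moreover have "0 \<le> fst x / k" "0 \<le> snd x / k" using x kk by simp_all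
  ultimately show ?thesis using b by (auto simp: usc_map_def usq_def mem_Times_iff)
qed

lemma cont_map: "continuous_on A (usc_map k e i)"
  unfolding usc_map_def by (intro continuous_intros)

lemma um_meas_cont:
  assumes "usc_measure k N e \<nu>" "continuous_on usq h"
  shows "h \<in> borel_measurable \<nu>"
proof -
  have eq: "borel_measurable \<nu> = borel_measurable (restrict_space borel usq)"
    by (rule measurable_cong_sets[OF um_sets[OF assms(1)] refl])
  show ?thesis unfolding eq by (rule borel_measurable_continuous_on_restrict[OF assms(2)])
qed

lemma um_meas_map:
  assumes "usc_measure k N e \<nu>" "cornr k N e" "i < N" "k > 0"
  shows "usc_map k e i \<in> measurable \<nu> \<nu>"
proof -
  have "usc_map k e i \<in> measurable (restrict_space borel usq) (restrict_space borel usq)"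
    by (intro measurable_restrict_space2 borel_measurable_continuous_on_restrict cont_map)
       (use map_usq[OF assms(2-4)] in \<open>auto simp: space_restrict_space\<close>)
  moreover have "measurable \<nu> \<nu> = measurable (restrict_space borel usq) (restrict_space borel usq)"
    by (rule measurable_cong_sets[OF um_sets[OF assms(1)] um_sets[OF assms(1)]])
  ultimately show ?thesis by simp
qed

lemma nn_inv:
  fixes g :: "real \<times> real \<Rightarrow> ennreal"
  assumes um: "usc_measure k N e \<nu>" and cor: "cornr k N e" and k: "k > 0"
    and g: "g \<in> borel_measurable \<nu>"
  shows "(\<integral>\<^sup>+x. g x \<partial>\<nu>) = ennreal (1 / real N) * (\<Sum>i<N. \<integral>\<^sup>+x. g (usc_map k e i x) \<partial>\<nu>)"
  using g
proof (induction rule: borel_measurable_induct)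
  case (cong f g)
  have "(\<integral>\<^sup>+x. f x \<partial>\<nu>) = (\<integral>\<^sup>+x. g x \<partial>\<nu>)" using cong.hyps(3) by (intro nn_integral_cong) auto
  moreover have "(\<integral>\<^sup>+x. f (usc_map k e i x) \<partial>\<nu>) = (\<integral>\<^sup>+x. g (usc_map k e i x) \<partial>\<nu>)" if "i < N" for i
    using cong.hyps(3) measurable_space[OF um_meas_map[OF um cor that k]] by (intro nn_integral_cong) auto
  ultimately show ?case using cong.IH by simp
next
  case (set A)
  have "(\<integral>\<^sup>+x. indicator A (usc_map k e i x) \<partial>\<nu>) = emeasure \<nu> (usc_map k e i -` A \<inter> space \<nu>)"
    if i: "i < N" for i
  proof -
    have "(\<integral>\<^sup>+x. indicator A (usc_map k e i x) \<partial>\<nu>) = (\<integral>\<^sup>+x. indicator (usc_map k e i -` A \<inter> space \<nu>) x \<partial>\<nu>)"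
      by (intro nn_integral_cong) (auto simp: indicator_def)
    also have "\<dots> = emeasure \<nu> (usc_map k e i -` A \<inter> space \<nu>)"
      using measurable_sets[OF um_meas_map[OF um cor i k] set.hyps] by simp
    finally show ?thesis .
  qed
  then show ?case using set.hyps um unfolding usc_measure_def by simp
next
  case (mult u c)
  have mu: "(\<lambda>x. u (usc_map k e i x)) \<in> borel_measurable \<nu>" if "i < N" for i
    using measurable_compose[OF um_meas_map[OF um cor that k] mult.hyps(2)] by (simp add: o_def)
  have "(\<integral>\<^sup>+x. c * u x \<partial>\<nu>) = c * (\<integral>\<^sup>+x. u x \<partial>\<nu>)" using mult.hyps(2) by (rule nn_integral_cmult)
  moreover have "(\<integral>\<^sup>+x. c * u (usc_map k e i x) \<partial>\<nu>) = c * (\<integral>\<^sup>+x. u (usc_map k e i x) \<partial>\<nu>)" if "i < N" for i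
    using mu[OF that] by (rule nn_integral_cmult)
  ultimately show ?case using mult.IH by (simp add: sum_distrib_left ac_simps)
next
  case (add u v)
  have mu: "(\<lambda>x. u (usc_map k e i x)) \<in> borel_measurable \<nu>" "(\<lambda>x. v (usc_map k e i x)) \<in> borel_measurable \<nu>" if "i < N" for i
    using measurable_compose[OF um_meas_map[OF um cor that k] add.hyps(1)]
          measurable_compose[OF um_meas_map[OF um cor that k] add.hyps(3)] by (simp_all add: o_def)
  have "(\<integral>\<^sup>+x. v x + u x \<partial>\<nu>) = (\<integral>\<^sup>+x. v x \<partial>\<nu>) + (\<integral>\<^sup>+x. u x \<partial>\<nu>)"
    using add.hyps(1,3) by (intro nn_integral_add) auto
  moreover have "(\<integral>\<^sup>+x. v (usc_map k e i x) + u (usc_map k e i x) \<partial>\<nu>) =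
      (\<integral>\<^sup>+x. v (usc_map k e i x) \<partial>\<nu>) + (\<integral>\<^sup>+x. u (usc_map k e i x) \<partial>\<nu>)" if "i < N" for i
    using mu[OF that] by (intro nn_integral_add) auto
  ultimately show ?case using add.IH by (simp add: sum.distrib distrib_left)
next
  case (seq U)
  have mU: "(\<lambda>x. U j (usc_map k e i x)) \<in> borel_measurable \<nu>" if "i < N" for i j
    using measurable_compose[OF um_meas_map[OF um cor that k] seq.hyps(1)] by (simp add: o_def)
  have inc: "incseq (\<lambda>j x. U j (usc_map k e i x))" for i
    using seq.hyps(3) unfolding incseq_def le_fun_def by blast
  have "(\<integral>\<^sup>+x. (SUP j. U j) x \<partial>\<nu>) = (SUP j. \<integral>\<^sup>+x. U j x \<partial>\<nu>)"
    unfolding SUP_apply using seq.hyps(1,3) by (intro nn_integral_monotone_convergence_SUP) auto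
  also have "\<dots> = (SUP j. ennreal (1 / real N) * (\<Sum>i<N. \<integral>\<^sup>+x. U j (usc_map k e i x) \<partial>\<nu>))"
    using seq.IH by simp
  also have "\<dots> = ennreal (1 / real N) * (SUP j. (\<Sum>i<N. \<integral>\<^sup>+x. U j (usc_map k e i x) \<partial>\<nu>))"
    by (simp add: SUP_mult_left_ennreal)
  also have "(SUP j. (\<Sum>i<N. \<integral>\<^sup>+x. U j (usc_map k e i x) \<partial>\<nu>)) = (\<Sum>i<N. SUP j. \<integral>\<^sup>+x. U j (usc_map k e i x) \<partial>\<nu>)"
  proof (rule ennreal_SUP_sum)
    fix i assume "i \<in> {..<N}"
    show "incseq (\<lambda>j. \<integral>\<^sup>+x. U j (usc_map k e i x) \<partial>\<nu>)"
      unfolding incseq_def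
    proof (intro allI impI nn_integral_mono)
      fix m n :: nat and x assume "m \<le> n"
      show "U m (usc_map k e i x) \<le> U n (usc_map k e i x)"
        by (rule le_funD[OF incseqD[OF seq.hyps(3) \<open>m \<le> n\<close>]])
    qed
  qed
  also have "\<dots> = (\<Sum>i<N. \<integral>\<^sup>+x. (SUP j. U j) (usc_map k e i x) \<partial>\<nu>)"
  proof (rule sum.cong[OF refl])
    fix i assume i: "i \<in> {..<N}"
    show "(SUP j. \<integral>\<^sup>+x. U j (usc_map k e i x) \<partial>\<nu>) = (\<integral>\<^sup>+x. (SUP j. U j) (usc_map k e i x) \<partial>\<nu>)"
      unfolding SUP_apply using mU i inc by (intro nn_integral_monotone_convergence_SUP[symmetric]) auto
  qed
  finally show ?case .
qed

lemma cont_bound: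
  fixes h :: "real \<times> real \<Rightarrow> real"
  assumes "continuous_on usq h"
  obtains B where "B \<ge> 0" "\<forall>x\<in>usq. \<bar>h x\<bar> \<le> B"
proof -
  have "compact (h ` usq)" by (rule compact_continuous_image[OF assms compact_usq])
  then obtain B where "\<forall>y\<in>h ` usq. norm y \<le> B" using compact_imp_bounded bounded_iff by metis
  then have "\<forall>x\<in>usq. \<bar>h x\<bar> \<le> max B 0" by auto
  then show ?thesis using that[of "max B 0"] by auto
qed

lemma um_integrable:
  fixes h :: "real \<times> real \<Rightarrow> real"
  assumes um: "usc_measure k N e \<nu>" and h: "continuous_on usq h"
  shows "integrable \<nu> h"
proof -
  interpret prob_space \<nu> using um_prob[OF um] .
  obtain B where B: "B \<ge> 0" "\<forall>x\<in>usq. \<bar>h x\<bar> \<le> B" using cont_bound[OF h] by blast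
  show ?thesis
  proof (rule integrable_const_bound[where B=B])
    show "AE x in \<nu>. norm (h x) \<le> B" using B um_space[OF um] by (intro AE_I2) auto
    show "h \<in> borel_measurable \<nu>" by (rule um_meas_cont[OF um h])
  qed
qed

lemma cont_comp_map:
  assumes "continuous_on usq h" "cornr k N e" "i < N" "k > 0"
  shows "continuous_on usq (\<lambda>x. h (usc_map k e i x))"
proof -
  have "usc_map k e i ` usq \<subseteq> usq" using map_usq[OF assms(2-4)] by blast
  then show ?thesis by (rule continuous_on_compose2[OF assms(1) cont_map])
qed

lemma int_inv:
  fixes h :: "real \<times> real \<Rightarrow> real"
  assumes um: "usc_measure k N e \<nu>" and cor: "cornr k N e" and k: "k > 0" and N: "N > 0"
    and h: "continuous_on usq h"
  shows "(\<integral>x. h x \<partial>\<nu>) = (\<integral>x. (1 / real N) * (\<Sum>i<N. h (usc_map k e i x)) \<partial>\<nu>)"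
proof -
  interpret prob_space \<nu> using um_prob[OF um] .
  have sp: "space \<nu> = usq" by (rule um_space[OF um])
  obtain B where B: "B \<ge> 0" "\<forall>x\<in>usq. \<bar>h x\<bar> \<le> B" using cont_bound[OF h] by blast
  define h' where "h' x = h x + B" for x
  have h'c: "continuous_on usq h'" unfolding h'_def by (intro continuous_intros h)
  have h'n: "0 \<le> h' x" if "x \<in> usq" for x using B that unfolding h'_def by force
  have hic: "continuous_on usq (\<lambda>x. h (usc_map k e i x))" if "i < N" for i
    by (rule cont_comp_map[OF h cor that k])
  have h'ic: "continuous_on usq (\<lambda>x. h' (usc_map k e i x))" if "i < N" for i
    by (rule cont_comp_map[OF h'c cor that k])
  have I1: "(\<integral>\<^sup>+x. ennreal (h' x) \<partial>\<nu>) = ennreal (\<integral>x. h' x \<partial>\<nu>)"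
    using um_integrable[OF um h'c] h'n sp by (intro nn_integral_eq_integral AE_I2) auto
  have I2: "(\<integral>\<^sup>+x. ennreal (h' (usc_map k e i x)) \<partial>\<nu>) = ennreal (\<integral>x. h' (usc_map k e i x) \<partial>\<nu>)"
    if i: "i < N" for i
    using um_integrable[OF um h'ic[OF i]] h'n sp map_usq[OF cor i k]
    by (intro nn_integral_eq_integral AE_I2) auto
  have nn0: "0 \<le> (\<integral>x. h' (usc_map k e i x) \<partial>\<nu>)" if i: "i < N" for i
    using h'n sp map_usq[OF cor i k] by (intro integral_nonneg_AE AE_I2) auto
  have mh: "(\<lambda>x. ennreal (h' x)) \<in> borel_measurable \<nu>"
    using um_meas_cont[OF um h'c] by measurable
  have "ennreal (\<integral>x. h' x \<partial>\<nu>) = ennreal (1 / real N) * (\<Sum>i<N. ennreal (\<integral>x. h' (usc_map k e i x) \<partial>\<nu>))"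
    using nn_inv[OF um cor k mh] I1 I2 by simp
  also have "\<dots> = ennreal ((1 / real N) * (\<Sum>i<N. \<integral>x. h' (usc_map k e i x) \<partial>\<nu>))"
  proof -
    have "(\<Sum>i<N. ennreal (\<integral>x. h' (usc_map k e i x) \<partial>\<nu>)) = ennreal (\<Sum>i<N. \<integral>x. h' (usc_map k e i x) \<partial>\<nu>)"
      using nn0 by (intro sum_ennreal) auto
    moreover have "0 \<le> (\<Sum>i<N. \<integral>x. h' (usc_map k e i x) \<partial>\<nu>)" using nn0 by (intro sum_nonneg) auto
    then have "ennreal (1 / real N) * ennreal (\<Sum>i<N. \<integral>x. h' (usc_map k e i x) \<partial>\<nu>)
        = ennreal ((1 / real N) * (\<Sum>i<N. \<integral>x. h' (usc_map k e i x) \<partial>\<nu>))"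
      by (intro ennreal_mult[symmetric]) auto
    ultimately show ?thesis by metis
  qed
  finally have E0: "ennreal (\<integral>x. h' x \<partial>\<nu>) = ennreal ((1 / real N) * (\<Sum>i<N. \<integral>x. h' (usc_map k e i x) \<partial>\<nu>))" .
  have E: "(\<integral>x. h' x \<partial>\<nu>) = (1 / real N) * (\<Sum>i<N. \<integral>x. h' (usc_map k e i x) \<partial>\<nu>)"
  proof -
    have "0 \<le> (\<Sum>i<N. \<integral>x. h' (usc_map k e i x) \<partial>\<nu>)" using nn0 by (intro sum_nonneg) auto
    then have p1: "0 \<le> (1 / real N) * (\<Sum>i<N. \<integral>x. h' (usc_map k e i x) \<partial>\<nu>)" by simp
    have p2: "0 \<le> (\<integral>x. h' x \<partial>\<nu>)" using h'n sp by (intro integral_nonneg_AE AE_I2) auto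
    from ennreal_inj[OF p2 p1] show ?thesis using E0 by simp
  qed
  have A1: "(\<integral>x. h' x \<partial>\<nu>) = (\<integral>x. h x \<partial>\<nu>) + B"
    unfolding h'_def using um_integrable[OF um h] by (simp add: prob_space)
  have A2: "(\<integral>x. h' (usc_map k e i x) \<partial>\<nu>) = (\<integral>x. h (usc_map k e i x) \<partial>\<nu>) + B" if i: "i < N" for i
    unfolding h'_def using um_integrable[OF um hic[OF i]] by (simp add: prob_space)
  have "(\<integral>x. h x \<partial>\<nu>) + B = (1 / real N) * (\<Sum>i<N. (\<integral>x. h (usc_map k e i x) \<partial>\<nu>) + B)"
    using E A1 A2 by simp
  also have "\<dots> = (1 / real N) * (\<Sum>i<N. \<integral>x. h (usc_map k e i x) \<partial>\<nu>) + B"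
    using N by (simp add: sum.distrib field_simps)
  finally have F: "(\<integral>x. h x \<partial>\<nu>) = (1 / real N) * (\<Sum>i<N. \<integral>x. h (usc_map k e i x) \<partial>\<nu>)" by simp
  have "(\<integral>x. (1 / real N) * (\<Sum>i<N. h (usc_map k e i x)) \<partial>\<nu>) = (1 / real N) * (\<integral>x. (\<Sum>i<N. h (usc_map k e i x)) \<partial>\<nu>)"
    by (rule integral_mult_right_zero)
  also have "(\<integral>x. (\<Sum>i<N. h (usc_map k e i x)) \<partial>\<nu>) = (\<Sum>i<N. \<integral>x. h (usc_map k e i x) \<partial>\<nu>)"
    using um_integrable[OF um hic] by (subst Bochner_Integration.integral_sum) auto
  finally show ?thesis using F by linarith
qed

fun Tm :: "nat \<Rightarrow> nat \<Rightarrow> (nat \<Rightarrow> real \<times> real) \<Rightarrow> nat \<Rightarrow> (real \<times> real \<Rightarrow> real) \<Rightarrow> real \<times> real \<Rightarrow> real" where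
  "Tm k N e 0 g x = g x"
| "Tm k N e (Suc m) g x = (1 / real N) * (\<Sum>i<N. Tm k N e m g (usc_map k e i x))"

lemma Tm_cont_seq:
  assumes cora: "\<forall>n. cornr k N (a n)" and corb: "cornr k N b"
    and lim: "\<forall>i<N. (\<lambda>n. a n i) \<longlonglongrightarrow> b i" and k: "k > 0" and g: "continuous_on usq g"
  shows "\<forall>x xs. (\<forall>n. xs n \<in> usq) \<longrightarrow> x \<in> usq \<longrightarrow> xs \<longlonglongrightarrow> x \<longrightarrow>
           (\<lambda>n. Tm k N (a n) m g (xs n)) \<longlonglongrightarrow> Tm k N b m g x"
proof (induction m)
  case 0
  show ?case
  proof (intro allI impI)
    fix x xs assume "\<forall>n. xs n \<in> usq" "x \<in> usq" "xs \<longlonglongrightarrow> x"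
    then have "(g \<circ> xs) \<longlonglongrightarrow> g x" using g unfolding continuous_on_sequentially by blast
    then show "(\<lambda>n. Tm k N (a n) 0 g (xs n)) \<longlonglongrightarrow> Tm k N b 0 g x" by (simp add: o_def)
  qed
next
  case (Suc m)
  show ?case
  proof (intro allI impI)
    fix x xs assume xs: "\<forall>n. xs n \<in> usq" and x: "x \<in> usq" and t: "xs \<longlonglongrightarrow> x"
    have "(\<lambda>n. Tm k N (a n) m g (usc_map k (a n) i (xs n))) \<longlonglongrightarrow> Tm k N b m g (usc_map k b i x)"
      if i: "i < N" for i
    proof -
      have "\<forall>n. usc_map k (a n) i (xs n) \<in> usq" using map_usq cora i k xs by blast
      moreover have "usc_map k b i x \<in> usq" using map_usq[OF corb i k x] .
      moreover have "(\<lambda>n. usc_map k (a n) i (xs n)) \<longlonglongrightarrow> usc_map k b i x"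
        unfolding usc_map_def using lim i t by (intro tendsto_intros) auto
      moreover note IH1 = spec[OF spec[OF Suc.IH, of "usc_map k b i x"], of "\<lambda>n. usc_map k (a n) i (xs n)"]
      ultimately show ?thesis by blast
    qed
    then have "(\<lambda>n. (1 / real N) * (\<Sum>i<N. Tm k N (a n) m g (usc_map k (a n) i (xs n)))) \<longlonglongrightarrow>
               (1 / real N) * (\<Sum>i<N. Tm k N b m g (usc_map k b i x))"
      by (intro tendsto_intros) auto
    then show "(\<lambda>n. Tm k N (a n) (Suc m) g (xs n)) \<longlonglongrightarrow> Tm k N b (Suc m) g x" by simp
  qed
qed

lemma Tm_cont:
  assumes "cornr k N e" "k > 0" "continuous_on usq g"
  shows "continuous_on usq (Tm k N e m g)"
  unfolding continuous_on_sequentially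
proof (intro allI ballI impI)
  fix xs x assume "x \<in> usq" "(\<forall>n. xs n \<in> usq) \<and> xs \<longlonglongrightarrow> x"
  moreover have H: "\<forall>x xs. (\<forall>n. xs n \<in> usq) \<longrightarrow> x \<in> usq \<longrightarrow> xs \<longlonglongrightarrow> x \<longrightarrow>
           (\<lambda>n. Tm k N ((\<lambda>n. e) n) m g (xs n)) \<longlonglongrightarrow> Tm k N e m g x"
    by (rule Tm_cont_seq) (use assms in auto)
  note H1 = spec[OF spec[OF H, of x], of xs]
  ultimately show "(Tm k N e m g \<circ> xs) \<longlonglongrightarrow> Tm k N e m g x"
    by (simp add: o_def)
qed

lemma Tm_set:
  assumes "inj_on e {..<N}" "inj_on e' {..<N}" "e ` {..<N} = e' ` {..<N}"
  shows "Tm k N e m g x = Tm k N e' m g x"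
proof (induction m arbitrary: x)
  case 0 then show ?case by simp
next
  case (Suc m)
  have eq: "Tm k N e m g = Tm k N e' m g" using Suc.IH by auto
  define F where "F p = Tm k N e' m g ((1/real k) *\<^sub>R x + p)" for p
  have "(\<Sum>i<N. Tm k N e m g (usc_map k e i x)) = (\<Sum>i<N. F (e i))"
    by (simp add: eq F_def usc_map_def)
  also have "\<dots> = sum F (e ` {..<N})" using sum.reindex[OF assms(1), of F] by (simp add: o_def)
  also have "\<dots> = sum F (e' ` {..<N})" using assms(3) by simp
  also have "\<dots> = (\<Sum>i<N. F (e' i))" using sum.reindex[OF assms(2), of F] by (simp add: o_def)
  also have "\<dots> = (\<Sum>i<N. Tm k N e' m g (usc_map k e' i x))" by (simp add: F_def usc_map_def)
  finally show ?case by simp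
qed

lemma Tm_osc:
  assumes k: "k \<ge> 1" and N: "N > 0" and cor: "cornr k N e"
    and osc: "\<forall>u\<in>usq. \<forall>v\<in>usq. dist u v \<le> r \<longrightarrow> \<bar>g u - g v\<bar> \<le> \<eta>"
  shows "\<forall>x\<in>usq. \<forall>y\<in>usq. dist x y \<le> real k ^ m * r \<longrightarrow> \<bar>Tm k N e m g x - Tm k N e m g y\<bar> \<le> \<eta>"
proof (induction m)
  case 0 then show ?case using osc by simp
next
  case (Suc m)
  show ?case
  proof (intro ballI impI)
    fix x y assume x: "x \<in> usq" and y: "y \<in> usq" and d: "dist x y \<le> real k ^ Suc m * r"
    have kk: "real k > 0" using k by simp
    have each: "\<bar>Tm k N e m g (usc_map k e i x) - Tm k N e m g (usc_map k e i y)\<bar> \<le> \<eta>" if i: "i < N" for i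
    proof -
      have "dist (usc_map k e i x) (usc_map k e i y) = dist x y / k"
        by (simp add: usc_map_def dist_norm scaleR_diff_right[symmetric])
      also have "\<dots> \<le> real k ^ m * r" using d kk by (simp add: divide_le_eq mult.commute mult.left_commute)
      finally show ?thesis
        using Suc.IH map_usq[OF cor i _ x] map_usq[OF cor i _ y] k by auto
    qed
    have "Tm k N e (Suc m) g x - Tm k N e (Suc m) g y =
          (1 / real N) * (\<Sum>i<N. (Tm k N e m g (usc_map k e i x) - Tm k N e m g (usc_map k e i y)))"
      by (simp only: Tm.simps sum_subtractf right_diff_distrib)
    then have "\<bar>Tm k N e (Suc m) g x - Tm k N e (Suc m) g y\<bar> =
          (1 / real N) * \<bar>\<Sum>i<N. (Tm k N e m g (usc_map k e i x) - Tm k N e m g (usc_map k e i y))\<bar>"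
      by (simp only: abs_mult) simp
    also have "\<dots> \<le> (1 / real N) * (\<Sum>i<N. \<bar>Tm k N e m g (usc_map k e i x) - Tm k N e m g (usc_map k e i y)\<bar>)"
      by (intro mult_left_mono sum_abs) auto
    also have "\<dots> \<le> (1 / real N) * (\<Sum>i<N. \<eta>)"
      using each by (intro mult_left_mono sum_mono) auto
    also have "\<dots> = \<eta>" using N by simp
    finally show "\<bar>Tm k N e (Suc m) g x - Tm k N e (Suc m) g y\<bar> \<le> \<eta>" .
  qed
qed

lemma Tm_int:
  assumes um: "usc_measure k N e \<nu>" and cor: "cornr k N e" and k: "k > 0" and N: "N > 0"
    and g: "continuous_on usq g"
  shows "(\<integral>x. Tm k N e m g x \<partial>\<nu>) = (\<integral>x. g x \<partial>\<nu>)"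
proof (induction m)
  case 0 then show ?case by simp
next
  case (Suc m)
  have "(\<integral>x. Tm k N e (Suc m) g x \<partial>\<nu>) = (\<integral>x. (1 / real N) * (\<Sum>i<N. Tm k N e m g (usc_map k e i x)) \<partial>\<nu>)"
    by simp
  also have "\<dots> = (\<integral>x. Tm k N e m g x \<partial>\<nu>)"
    by (rule int_inv[OF um cor k N Tm_cont[OF cor k g], symmetric])
  finally show ?case using Suc.IH by simp
qed

lemma Tm_approx:
  assumes um: "usc_measure k N e \<nu>" and cor: "cornr k N e" and k: "k > 0" and N: "N > 0"
    and g: "continuous_on usq g" and x0: "x0 \<in> usq"
    and osc: "\<forall>x\<in>usq. \<bar>Tm k N e m g x - Tm k N e m g x0\<bar> \<le> \<eta>"
  shows "\<bar>(\<integral>x. g x \<partial>\<nu>) - Tm k N e m g x0\<bar> \<le> \<eta>"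
proof -
  interpret prob_space \<nu> using um_prob[OF um] .
  have sp: "space \<nu> = usq" by (rule um_space[OF um])
  have I: "integrable \<nu> (Tm k N e m g)" by (rule um_integrable[OF um Tm_cont[OF cor k g]])
  have "(\<integral>x. Tm k N e m g x \<partial>\<nu>) \<le> Tm k N e m g x0 + \<eta>"
    using osc sp by (intro integral_le_const I AE_I2) (auto simp: abs_le_iff)
  moreover have "Tm k N e m g x0 - \<eta> \<le> (\<integral>x. Tm k N e m g x \<partial>\<nu>)"
    using osc sp by (intro integral_ge_const I AE_I2) (auto simp: abs_le_iff)
  ultimately show ?thesis using Tm_int[OF um cor k N g, of m] by (simp add: abs_le_iff)
qed

lemma sepr_inj: assumes "sepr k N e" "k > 0" shows "inj_on e {..<N}"
proof (rule inj_onI)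
  fix i j assume i: "i \<in> {..<N}" and j: "j \<in> {..<N}" and eq: "e i = e j"
  show "i = j"
  proof (rule ccontr)
    assume "i \<noteq> j"
    then have "1/k \<le> \<bar>fst (e i) - fst (e j)\<bar> \<or> 1/k \<le> \<bar>snd (e i) - snd (e j)\<bar>"
      using assms(1) i j unfolding sepr_def by auto
    then have "1 / real k \<le> 0" using eq by simp
    moreover have "1 / real k > 0" using assms(2) by simp
    ultimately show False by linarith
  qed
qed

lemma usq_diam: assumes "x \<in> usq" "y \<in> usq" shows "dist x y \<le> 2"
proof -
  obtain a b c d where xy: "x = (a,b)" "y = (c,d)" by (cases x, cases y) auto
  have "\<bar>a - c\<bar> \<le> 1" "\<bar>b - d\<bar> \<le> 1" using assms xy by (auto simp: usq_def)
  moreover have "dist x y \<le> \<bar>a - c\<bar> + \<bar>b - d\<bar>"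
    unfolding xy dist_Pair_Pair dist_real_def using sqrt_sum_squares_le_sum_abs by simp
  ultimately show ?thesis by linarith
qed

lemma cornr_usq: assumes "cornr k N e" "i < N" "k > 0" shows "e i \<in> usq"
proof -
  have b: "0 \<le> fst (e i)" "fst (e i) \<le> 1 - 1/k" "0 \<le> snd (e i)" "snd (e i) \<le> 1 - 1/k"
    using assms unfolding cornr_def by auto
  have "0 \<le> 1 / real k" by simp
  then have "fst (e i) \<le> 1" "snd (e i) \<le> 1" using b by linarith+
  then show ?thesis using b by (auto simp: usq_def mem_Times_iff)
qed

lemma good_subseq:
  fixes f :: "real \<times> real \<Rightarrow> real"
  assumes A1: "\<And>n. usc k N (cs n) (Ks n)"
    and A2: "usc k N c K"
    and A3: "(\<lambda>n. hausdorff_dist (Ks n) K) \<longlonglongrightarrow> 0"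
    and A4: "\<And>n. usc_measure k N (cs n) (\<mu>s n)"
    and A5: "usc_measure k N c \<mu>"
    and f: "continuous_on usq f"
    and s: "strict_mono s" and lim: "\<forall>i<N. (\<lambda>n. cs (s n) i) \<longlonglongrightarrow> c' i"
  shows "(\<lambda>n. \<integral>x. f x \<partial>\<mu>s (s n)) \<longlonglongrightarrow> (\<integral>x. f x \<partial>\<mu>)"
proof -
  have d: "usc_data k N c" and Kc: "compact K" "K \<noteq> {}" using A2 unfolding usc_def by auto
  have k3: "k \<ge> 3" using data_k[OF d] .
  then have k: "k > 0" "k \<ge> 1" by auto
  have N: "N > 0" using d k3 unfolding usc_data_def by auto
  have U: "\<And>n. usc k N (cs (s n)) (Ks (s n))" using A1 .
  have hd: "(\<lambda>n. hausdorff_dist (Ks (s n)) K) \<longlonglongrightarrow> 0"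
    using LIMSEQ_subseq_LIMSEQ[OF A3 s] by (simp add: o_def)
  note LC = limit_config[OF U Kc hd lim]
  have corc: "cornr k N c" by (rule data_cor[OF d])
  have sepc: "sepr k N c" by (rule data_sep[OF d])
  have corn: "cornr k N (cs n)" for n using data_cor A1 unfolding usc_def by blast
  have eqs: "c ` {..<N} = c' ` {..<N}"
    by (rule rigid[OF k(1) sepc LC(1) usc_cells[OF A2] LC(3) _ LC(4) usc_small[OF A2]])
       (use usc_inv[OF A2] in blast)
  have injc: "inj_on c {..<N}" by (rule sepr_inj[OF sepc k(1)])
  have injc': "inj_on c' {..<N}" by (rule sepr_inj[OF LC(1) k(1)])
  define x0 :: "real \<times> real" where "x0 = (0,0)"
  have x0: "x0 \<in> usq" by (simp add: x0_def usq_def)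
  show ?thesis
    unfolding tendsto_iff
  proof (intro allI impI)
    fix \<epsilon> :: real assume eps: "\<epsilon> > 0"
    have "uniformly_continuous_on usq f" by (rule compact_uniformly_continuous[OF f compact_usq])
    moreover have e3: "\<epsilon>/3 > 0" using eps by simp
    ultimately obtain \<delta> where \<delta>: "\<delta> > 0" "\<forall>x\<in>usq. \<forall>x'\<in>usq. dist x' x < \<delta> \<longrightarrow> dist (f x') (f x) < \<epsilon>/3"
      unfolding uniformly_continuous_on_def by blast
    define r where "r = \<delta> / 2"
    have r: "r > 0" using \<delta> by (simp add: r_def)
    have osc: "\<forall>u\<in>usq. \<forall>v\<in>usq. dist u v \<le> r \<longrightarrow> \<bar>f u - f v\<bar> \<le> \<epsilon>/3"
    proof (intro ballI impI)
      fix u v assume uv: "u \<in> usq" "v \<in> usq" "dist u v \<le> r"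
      then have "dist u v < \<delta>" using \<delta> by (simp add: r_def)
      then have "dist (f u) (f v) < \<epsilon>/3" using \<delta>(2) uv by blast
      then show "\<bar>f u - f v\<bar> \<le> \<epsilon>/3" by (simp add: dist_real_def)
    qed
    obtain m where m: "2 / r < real k ^ m"
      using real_arch_pow[of "real k" "2 / r"] k3 by auto
    have km: "2 \<le> real k ^ m * r" using m r by (simp add: divide_less_eq less_imp_le)
    have approx: "\<bar>(\<integral>x. f x \<partial>\<nu>) - Tm k N e m f x0\<bar> \<le> \<epsilon>/3"
      if um: "usc_measure k N e \<nu>" and cor: "cornr k N e" for e \<nu>
    proof (rule Tm_approx[OF um cor k(1) N f x0])
      have "\<forall>x\<in>usq. \<forall>y\<in>usq. dist x y \<le> real k ^ m * r \<longrightarrow> \<bar>Tm k N e m f x - Tm k N e m f y\<bar> \<le> \<epsilon>/3"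
        by (rule Tm_osc[OF k(2) N cor osc])
      moreover have "\<forall>x\<in>usq. dist x x0 \<le> real k ^ m * r"
      proof
        fix x assume "x \<in> usq"
        then have "dist x x0 \<le> 2" using usq_diam x0 by blast
        then show "dist x x0 \<le> real k ^ m * r" using km by linarith
      qed
      ultimately show "\<forall>x\<in>usq. \<bar>Tm k N e m f x - Tm k N e m f x0\<bar> \<le> \<epsilon>/3"
        using x0 by blast
    qed
    have conv: "(\<lambda>n. Tm k N (cs (s n)) m f x0) \<longlonglongrightarrow> Tm k N c' m f x0"
    proof -
      have "\<forall>x xs. (\<forall>n. xs n \<in> usq) \<longrightarrow> x \<in> usq \<longrightarrow> xs \<longlonglongrightarrow> x \<longrightarrow>
           (\<lambda>n. Tm k N ((\<lambda>n. cs (s n)) n) m f (xs n)) \<longlonglongrightarrow> Tm k N c' m f x"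
        by (rule Tm_cont_seq) (use corn LC(2) lim k f in auto)
      note H = spec[OF spec[OF this, of x0], of "\<lambda>n. x0"]
      then show ?thesis using x0 by simp
    qed
    have same: "Tm k N c' m f x0 = Tm k N c m f x0" by (rule Tm_set[OF injc' injc eqs[symmetric]])
    have "\<forall>\<^sub>F n in sequentially. dist (Tm k N (cs (s n)) m f x0) (Tm k N c m f x0) < \<epsilon>/3"
      using conv e3 unfolding tendsto_iff same by blast
    then show "\<forall>\<^sub>F n in sequentially. dist (\<integral>x. f x \<partial>\<mu>s (s n)) (\<integral>x. f x \<partial>\<mu>) < \<epsilon>"
    proof (rule eventually_mono)
      fix n assume h: "dist (Tm k N (cs (s n)) m f x0) (Tm k N c m f x0) < \<epsilon>/3"
      have a1: "\<bar>(\<integral>x. f x \<partial>\<mu>s (s n)) - Tm k N (cs (s n)) m f x0\<bar> \<le> \<epsilon>/3"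
        by (rule approx[OF A4 corn])
      have a2: "\<bar>(\<integral>x. f x \<partial>\<mu>) - Tm k N c m f x0\<bar> \<le> \<epsilon>/3"
        by (rule approx[OF A5 corc])
      show "dist (\<integral>x. f x \<partial>\<mu>s (s n)) (\<integral>x. f x \<partial>\<mu>) < \<epsilon>"
      proof -
        have h': "\<bar>Tm k N (cs (s n)) m f x0 - Tm k N c m f x0\<bar> < \<epsilon>/3" using h by (simp add: dist_real_def)
        note b1 = a1[unfolded abs_le_iff] and b2 = a2[unfolded abs_le_iff] and b3 = h'[unfolded abs_less_iff]
        show ?thesis unfolding dist_real_def abs_less_iff using b1 b2 b3 by (intro conjI) linarith+
      qed
    qed
  qed
qed

theorem proposition7p3:
  fixes k N :: nat
    and cs :: "nat \<Rightarrow> nat \<Rightarrow> real \<times> real" and Ks :: "nat \<Rightarrow> (real \<times> real) set"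
    and c :: "nat \<Rightarrow> real \<times> real" and K :: "(real \<times> real) set"
    and \<mu>s :: "nat \<Rightarrow> (real \<times> real) measure" and \<mu> :: "(real \<times> real) measure"
  assumes "\<And>n. usc k N (cs n) (Ks n)"
    and "usc k N c K"
    and "(\<lambda>n. hausdorff_dist (Ks n) K) \<longlonglongrightarrow> 0"
    and "\<And>n. usc_measure k N (cs n) (\<mu>s n)"
    and "usc_measure k N c \<mu>"
  shows "weak_conv_on usq \<mu>s \<mu>"
  unfolding weak_conv_on_def
proof (intro allI impI)
  fix f :: "real \<times> real \<Rightarrow> real"
  assume "continuous_on usq f \<and> bounded (f ` usq)"
  then have f: "continuous_on usq f" by simp
  have d: "usc_data k N c" using assms(2) unfolding usc_def by auto
  have k: "k > 0" using data_k[OF d] by simp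
  show "(\<lambda>n. \<integral>x. f x \<partial>\<mu>s n) \<longlonglongrightarrow> (\<integral>x. f x \<partial>\<mu>)"
  proof (rule ccontr)
    assume nc: "\<not> (\<lambda>n. \<integral>x. f x \<partial>\<mu>s n) \<longlonglongrightarrow> (\<integral>x. f x \<partial>\<mu>)"
    then obtain \<epsilon> where eps: "\<epsilon> > 0"
      and ne: "\<not> (\<forall>\<^sub>F n in sequentially. dist (\<integral>x. f x \<partial>\<mu>s n) (\<integral>x. f x \<partial>\<mu>) < \<epsilon>)"
      unfolding tendsto_iff by blast
    have "frequently (\<lambda>n. \<not> dist (\<integral>x. f x \<partial>\<mu>s n) (\<integral>x. f x \<partial>\<mu>) < \<epsilon>) cofinite"
      using ne by (simp add: cofinite_eq_sequentially not_eventually)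
    then have "infinite {n. \<not> dist (\<integral>x. f x \<partial>\<mu>s n) (\<integral>x. f x \<partial>\<mu>) < \<epsilon>}"
      by (simp add: frequently_cofinite)
    then obtain r :: "nat \<Rightarrow> nat" where r: "strict_mono r" "\<forall>n. \<not> dist (\<integral>x. f x \<partial>\<mu>s (r n)) (\<integral>x. f x \<partial>\<mu>) < \<epsilon>"
      using infinite_enumerate by blast
    have corn: "cornr k N (cs n)" for n using data_cor assms(1) unfolding usc_def by blast
    define a where "a n i = (if i < N then cs (r n) i else (0,0))" for n i
    have aS: "\<forall>n i. a n i \<in> usq" using cornr_usq[OF corn _ k] by (auto simp: a_def usq_def)
    obtain r2 where r2: "strict_mono r2" "\<forall>i<N. \<exists>l. (\<lambda>n. a (r2 n) i) \<longlonglongrightarrow> l"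
      using subseq_tuple[OF aS compact_usq] by blast
    have "\<forall>i. \<exists>l. i < N \<longrightarrow> (\<lambda>n. a (r2 n) i) \<longlonglongrightarrow> l" using r2(2) by blast
    then obtain c' where c': "\<forall>i. i < N \<longrightarrow> (\<lambda>n. a (r2 n) i) \<longlonglongrightarrow> c' i" by metis
    have lim: "\<forall>i<N. (\<lambda>n. cs ((r \<circ> r2) n) i) \<longlonglongrightarrow> c' i" using c' by (auto simp: a_def)
    have "(\<lambda>n. \<integral>x. f x \<partial>\<mu>s ((r \<circ> r2) n)) \<longlonglongrightarrow> (\<integral>x. f x \<partial>\<mu>)"
      by (rule good_subseq[OF assms f strict_mono_o[OF r(1) r2(1)] lim])
    then have "\<forall>\<^sub>F n in sequentially. dist (\<integral>x. f x \<partial>\<mu>s ((r \<circ> r2) n)) (\<integral>x. f x \<partial>\<mu>) < \<epsilon>"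
      using eps unfolding tendsto_iff by blast
    then obtain N0 where "\<forall>n\<ge>N0. dist (\<integral>x. f x \<partial>\<mu>s ((r \<circ> r2) n)) (\<integral>x. f x \<partial>\<mu>) < \<epsilon>"
      unfolding eventually_sequentially by blast
    then have "dist (\<integral>x. f x \<partial>\<mu>s ((r \<circ> r2) N0)) (\<integral>x. f x \<partial>\<mu>) < \<epsilon>" by blast
    then show False using r(2) by (simp add: o_def)
  qed
qed

end
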